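(* (i) There exists a non-commutative semiring $S$ (with identity) which is additively cancellative, reduced, centrally essential, and has no non-zero zero-divisors. (ii) Let $S$ be an additively cancellative reduced semiring and let $D(S)$ be its ring of differences. Then $S$ is commutative if and only if $D(S)$ is a centrally essential ring.
   Context: A semiring is a set $S$ with two binary operations $+$ and $\cdot$ such that $(S,+)$ is a commutative monoid with neutral element $0$, $(S,\cdot)$ is a monoid with identity $1$, multiplication distributes over addition on both sides, and $0s=s0=0$ for all $s\in S$ (i.e. an associative ring with $1$ except that additive inverses need not exist). The center of $S$ is $C(S)=\{s\in S: ss'=s's \text{ for all } s'\in S\}$. $S$ is centrally essential if for every non-zero $x\in S$ there exist non-zero $y,z\in C(S)$ with $xy=z$ (for rings this is the same definition). $S$ is reduced if for all $x,y\in S$, $x^2+y^2=xy+yx$ implies $x=y$. $S$ is additively cancellative if $x+z=y+z$ implies $x=y$ for all $x,y,z\in S$. An additively cancellative semiring $S$ embeds as a subsemiring in a ring $D(S)$, its ring of differences, in which every element has the form $x-y$ with $x,y\in S$; $D(S)$ is unique up to isomorphism over $S$. An element $a\in S$ is a left zero-divisor if $ab=0$ for some non-zero $b\in S$ (right zero-divisors analogously); "without zero-divisors" means there are no non-zero zero-divisors. *)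

theory Defs
  imports "HOL-Algebra.Ring"
begin

text \<open>Semirings with identity, represented by HOL-Algebra ring records
  (carrier, add, mult, zero, one). A semiring need not have additive inverses,
  and 0 = 1 is allowed.\<close>

definition semiring :: "('a, 'm) ring_scheme \<Rightarrow> bool" where
  "semiring S \<longleftrightarrow>
     \<zero>\<^bsub>S\<^esub> \<in> carrier S \<and> \<one>\<^bsub>S\<^esub> \<in> carrier S \<and>
     (\<forall>x\<in>carrier S. \<forall>y\<in>carrier S. x \<oplus>\<^bsub>S\<^esub> y \<in> carrier S \<and> x \<otimes>\<^bsub>S\<^esub> y \<in> carrier S) \<and>
     (\<forall>x\<in>carrier S. \<forall>y\<in>carrier S. \<forall>z\<in>carrier S.
        (x \<oplus>\<^bsub>S\<^esub> y) \<oplus>\<^bsub>S\<^esub> z = x \<oplus>\<^bsub>S\<^esub> (y \<oplus>\<^bsub>S\<^esub> z) \<and>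
        (x \<otimes>\<^bsub>S\<^esub> y) \<otimes>\<^bsub>S\<^esub> z = x \<otimes>\<^bsub>S\<^esub> (y \<otimes>\<^bsub>S\<^esub> z) \<and>
        x \<otimes>\<^bsub>S\<^esub> (y \<oplus>\<^bsub>S\<^esub> z) = (x \<otimes>\<^bsub>S\<^esub> y) \<oplus>\<^bsub>S\<^esub> (x \<otimes>\<^bsub>S\<^esub> z) \<and>
        (y \<oplus>\<^bsub>S\<^esub> z) \<otimes>\<^bsub>S\<^esub> x = (y \<otimes>\<^bsub>S\<^esub> x) \<oplus>\<^bsub>S\<^esub> (z \<otimes>\<^bsub>S\<^esub> x)) \<and>
     (\<forall>x\<in>carrier S. \<forall>y\<in>carrier S. x \<oplus>\<^bsub>S\<^esub> y = y \<oplus>\<^bsub>S\<^esub> x) \<and>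
     (\<forall>x\<in>carrier S. x \<oplus>\<^bsub>S\<^esub> \<zero>\<^bsub>S\<^esub> = x \<and>
        \<one>\<^bsub>S\<^esub> \<otimes>\<^bsub>S\<^esub> x = x \<and> x \<otimes>\<^bsub>S\<^esub> \<one>\<^bsub>S\<^esub> = x \<and>
        \<zero>\<^bsub>S\<^esub> \<otimes>\<^bsub>S\<^esub> x = \<zero>\<^bsub>S\<^esub> \<and> x \<otimes>\<^bsub>S\<^esub> \<zero>\<^bsub>S\<^esub> = \<zero>\<^bsub>S\<^esub>)"

definition center :: "('a, 'm) ring_scheme \<Rightarrow> 'a set" where
  "center S = {s \<in> carrier S. \<forall>t\<in>carrier S. s \<otimes>\<^bsub>S\<^esub> t = t \<otimes>\<^bsub>S\<^esub> s}"

definition centrally_essential :: "('a, 'm) ring_scheme \<Rightarrow> bool" where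
  "centrally_essential S \<longleftrightarrow>
     (\<forall>x\<in>carrier S. x \<noteq> \<zero>\<^bsub>S\<^esub> \<longrightarrow>
        (\<exists>y\<in>center S. \<exists>z\<in>center S. y \<noteq> \<zero>\<^bsub>S\<^esub> \<and> z \<noteq> \<zero>\<^bsub>S\<^esub> \<and> x \<otimes>\<^bsub>S\<^esub> y = z))"

definition reduced :: "('a, 'm) ring_scheme \<Rightarrow> bool" where
  "reduced S \<longleftrightarrow>
     (\<forall>x\<in>carrier S. \<forall>y\<in>carrier S.
        (x \<otimes>\<^bsub>S\<^esub> x) \<oplus>\<^bsub>S\<^esub> (y \<otimes>\<^bsub>S\<^esub> y) = (x \<otimes>\<^bsub>S\<^esub> y) \<oplus>\<^bsub>S\<^esub> (y \<otimes>\<^bsub>S\<^esub> x) \<longrightarrow> x = y)"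

definition add_cancellative :: "('a, 'm) ring_scheme \<Rightarrow> bool" where
  "add_cancellative S \<longleftrightarrow>
     (\<forall>x\<in>carrier S. \<forall>y\<in>carrier S. \<forall>z\<in>carrier S.
        x \<oplus>\<^bsub>S\<^esub> z = y \<oplus>\<^bsub>S\<^esub> z \<longrightarrow> x = y)"

definition mult_commutative :: "('a, 'm) ring_scheme \<Rightarrow> bool" where
  "mult_commutative S \<longleftrightarrow>
     (\<forall>x\<in>carrier S. \<forall>y\<in>carrier S. x \<otimes>\<^bsub>S\<^esub> y = y \<otimes>\<^bsub>S\<^esub> x)"

definition no_zero_divisors :: "('a, 'm) ring_scheme \<Rightarrow> bool" where
  "no_zero_divisors S \<longleftrightarrow>
     (\<forall>a\<in>carrier S. \<forall>b\<in>carrier S. a \<otimes>\<^bsub>S\<^esub> b = \<zero>\<^bsub>S\<^esub> \<longrightarrow>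
        a = \<zero>\<^bsub>S\<^esub> \<or> b = \<zero>\<^bsub>S\<^esub>)"

definition ring_of_differences ::
  "('a, 'm) ring_scheme \<Rightarrow> ('b, 'n) ring_scheme \<Rightarrow> ('a \<Rightarrow> 'b) \<Rightarrow> bool" where
  "ring_of_differences S D h \<longleftrightarrow>
     ring D \<and> h \<in> ring_hom S D \<and> inj_on h (carrier S) \<and>
     carrier D = {h x \<ominus>\<^bsub>D\<^esub> h y | x y. x \<in> carrier S \<and> y \<in> carrier S}"

end

theory Submission
  imports Defs "HOL-Library.Countable"
begin


context ring begin

lemma rme:
  assumes "a \<in> carrier R" "b \<in> carrier R"
  shows "a \<ominus> b = \<zero> \<longleftrightarrow> a = b"
  using assms by (metis a_minus_def add.inv_closed minus_equality r_neg)

lemma comm_central: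
  assumes w: "w \<in> carrier R" "\<forall>t\<in>carrier R. w \<otimes> t = t \<otimes> w"
    and x: "x \<in> carrier R" and y: "y \<in> carrier R"
  shows "(x \<otimes> w) \<otimes> y \<ominus> y \<otimes> (x \<otimes> w) = (x \<otimes> y \<ominus> y \<otimes> x) \<otimes> w"
proof -
  have 1: "(x \<otimes> w) \<otimes> y = (x \<otimes> y) \<otimes> w"
  proof -
    have "(x \<otimes> w) \<otimes> y = x \<otimes> (w \<otimes> y)" using w(1) x y by (simp add: m_assoc)
    also have "\<dots> = x \<otimes> (y \<otimes> w)" using w(2) y by simp
    also have "\<dots> = (x \<otimes> y) \<otimes> w" using w(1) x y by (simp add: m_assoc)
    finally show ?thesis .
  qed
  have 2: "y \<otimes> (x \<otimes> w) = (y \<otimes> x) \<otimes> w"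
    using w(1) x y by (simp add: m_assoc)
  show ?thesis unfolding 1 2 using w(1) x y
    by (simp add: minus_eq l_distr l_minus)
qed

lemma central_mult:
  assumes "a \<in> center R" "b \<in> center R" shows "a \<otimes> b \<in> center R"
proof -
  have "a \<in> carrier R" "b \<in> carrier R" "\<forall>t\<in>carrier R. a \<otimes> t = t \<otimes> a" "\<forall>t\<in>carrier R. b \<otimes> t = t \<otimes> b"
    using assms unfolding center_def by auto
  then have "(a \<otimes> b) \<otimes> t = t \<otimes> (a \<otimes> b)" if t: "t \<in> carrier R" for t
  proof -
    have "(a \<otimes> b) \<otimes> t = a \<otimes> (b \<otimes> t)" using t \<open>a \<in> carrier R\<close> \<open>b \<in> carrier R\<close> by (simp add: m_assoc)
    also have "\<dots> = a \<otimes> (t \<otimes> b)" using t \<open>\<forall>t\<in>carrier R. b \<otimes> t = t \<otimes> b\<close> by simp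
    also have "\<dots> = (a \<otimes> t) \<otimes> b" using t \<open>a \<in> carrier R\<close> \<open>b \<in> carrier R\<close> by (simp add: m_assoc)
    also have "\<dots> = (t \<otimes> a) \<otimes> b" using t \<open>\<forall>t\<in>carrier R. a \<otimes> t = t \<otimes> a\<close> by simp
    also have "\<dots> = t \<otimes> (a \<otimes> b)" using t \<open>a \<in> carrier R\<close> \<open>b \<in> carrier R\<close> by (simp add: m_assoc)
    finally show ?thesis .
  qed
  then show ?thesis unfolding center_def using \<open>a \<in> carrier R\<close> \<open>b \<in> carrier R\<close> by simp
qed

lemma reduced_ce_comm:
  assumes red: "\<forall>d\<in>carrier R. d \<otimes> d = \<zero> \<longrightarrow> d = \<zero>"
    and ce: "centrally_essential R"
    and a: "a \<in> carrier R" and b: "b \<in> carrier R"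
  shows "a \<otimes> b = b \<otimes> a"
proof (rule ccontr)
  assume ne: "a \<otimes> b \<noteq> b \<otimes> a"
  define c where "c = a \<otimes> b \<ominus> b \<otimes> a"
  have cC: "c \<in> carrier R" using a b by (simp add: c_def)
  have "c \<noteq> \<zero>"
  proof
    assume "c = \<zero>"
    then have "a \<otimes> b \<ominus> b \<otimes> a = \<zero>" by (simp add: c_def)
    then show False using ne a b by (metis m_closed rme)
  qed
  then obtain s z where s: "s \<in> center R" and z: "z \<in> center R" and "s \<noteq> \<zero>" "z \<noteq> \<zero>"
    and cs: "c \<otimes> s = z"
    using ce cC unfolding centrally_essential_def by blast
  have sC: "s \<in> carrier R" and sc: "\<forall>t\<in>carrier R. s \<otimes> t = t \<otimes> s" using s by (auto simp: center_def)
  have zC: "z \<in> carrier R" and zc: "\<forall>t\<in>carrier R. z \<otimes> t = t \<otimes> z" using z by (auto simp: center_def)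
  define u where "u = a \<otimes> s"
  have uC: "u \<in> carrier R" using a sC by (simp add: u_def)
  have ub: "u \<otimes> b \<ominus> b \<otimes> u = z"
    unfolding u_def using comm_central[OF sC sc a b] cs by (simp add: c_def)
  show False
  proof (cases "u \<otimes> z = \<zero>")
    case True
    have "z \<otimes> z = (u \<otimes> z) \<otimes> b \<ominus> b \<otimes> (u \<otimes> z)"
      using comm_central[OF zC zc uC b] ub by simp
    also have "\<dots> = \<zero>" using True b rme by simp
    finally show False using red zC \<open>z \<noteq> \<zero>\<close> by blast
  next
    case False
    then obtain r v where r: "r \<in> center R" and v: "v \<in> center R" and "r \<noteq> \<zero>" "v \<noteq> \<zero>"
      and uzr: "(u \<otimes> z) \<otimes> r = v"
      using ce uC zC unfolding centrally_essential_def by blast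
    have rC: "r \<in> carrier R" and rc: "\<forall>t\<in>carrier R. r \<otimes> t = t \<otimes> r" using r by (auto simp: center_def)
    have vC: "v \<in> carrier R" and vc: "\<forall>t\<in>carrier R. v \<otimes> t = t \<otimes> v" using v by (auto simp: center_def)
    have zr: "z \<otimes> r \<in> center R" using central_mult[OF z r] .
    have zrC: "z \<otimes> r \<in> carrier R" and zrc: "\<forall>t\<in>carrier R. (z \<otimes> r) \<otimes> t = t \<otimes> (z \<otimes> r)"
      using zr by (auto simp: center_def)
    have vv: "v = u \<otimes> (z \<otimes> r)" using uzr uC zC rC by (simp add: m_assoc)
    have "z \<otimes> (z \<otimes> r) = (u \<otimes> (z \<otimes> r)) \<otimes> b \<ominus> b \<otimes> (u \<otimes> (z \<otimes> r))"
      using comm_central[OF zrC zrc uC b] ub by simp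
    also have "\<dots> = \<zero>" unfolding vv[symmetric] using vc b vC rme by auto
    finally have zz: "z \<otimes> (z \<otimes> r) = \<zero>" .
    have "(z \<otimes> r) \<otimes> (z \<otimes> r) = (z \<otimes> (z \<otimes> r)) \<otimes> r"
      using zC rC rc by (metis m_assoc m_closed)
    also have "\<dots> = \<zero>" using zz rC by simp
    finally have "z \<otimes> r = \<zero>" using red zrC by blast
    then have "v = \<zero>" using vv uC by simp
    then show False using \<open>v \<noteq> \<zero>\<close> by simp
  qed
qed


lemma sq_diff:
  assumes "a \<in> carrier R" "b \<in> carrier R"
  shows "(a \<ominus> b) \<otimes> (a \<ominus> b) = (a \<otimes> a \<oplus> b \<otimes> b) \<ominus> (a \<otimes> b \<oplus> b \<otimes> a)"
  using assms by (simp add: minus_eq l_distr r_distr l_minus r_minus minus_add a_ac)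

lemma comm_diff:
  assumes "p \<in> carrier R" "q1 \<in> carrier R" "q2 \<in> carrier R"
    "p \<otimes> q1 = q1 \<otimes> p" "p \<otimes> q2 = q2 \<otimes> p"
  shows "p \<otimes> (q1 \<ominus> q2) = (q1 \<ominus> q2) \<otimes> p"
  using assms by (simp add: minus_eq l_distr r_distr l_minus r_minus)

end

lemma part2:
  fixes S :: "('a, 'm) ring_scheme" and D :: "('b, 'n) ring_scheme"
  assumes sr: "semiring S" and red: "reduced S" and rd: "ring_of_differences S D h"
  shows "mult_commutative S \<longleftrightarrow> centrally_essential D"
proof -
  have rD: "ring D" and hom: "h \<in> ring_hom S D" and inj: "inj_on h (carrier S)"
    and cD: "carrier D = {h x \<ominus>\<^bsub>D\<^esub> h y | x y. x \<in> carrier S \<and> y \<in> carrier S}"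
    using rd unfolding ring_of_differences_def by auto
  interpret D: ring D by (rule rD)
  have hC: "h x \<in> carrier D" if "x \<in> carrier S" for x
    using hom that by (rule ring_hom_closed)
  have hmul: "h (x \<otimes>\<^bsub>S\<^esub> y) = h x \<otimes>\<^bsub>D\<^esub> h y" if "x \<in> carrier S" "y \<in> carrier S" for x y
    using hom that by (rule ring_hom_mult)
  have hadd: "h (x \<oplus>\<^bsub>S\<^esub> y) = h x \<oplus>\<^bsub>D\<^esub> h y" if "x \<in> carrier S" "y \<in> carrier S" for x y
    using hom that by (rule ring_hom_add)
  have mC: "x \<otimes>\<^bsub>S\<^esub> y \<in> carrier S" and aC: "x \<oplus>\<^bsub>S\<^esub> y \<in> carrier S"
    if "x \<in> carrier S" "y \<in> carrier S" for x y
    using sr that unfolding semiring_def by auto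
  have Dred: "\<forall>d\<in>carrier D. d \<otimes>\<^bsub>D\<^esub> d = \<zero>\<^bsub>D\<^esub> \<longrightarrow> d = \<zero>\<^bsub>D\<^esub>"
  proof (intro ballI impI)
    fix d assume d: "d \<in> carrier D" and dd: "d \<otimes>\<^bsub>D\<^esub> d = \<zero>\<^bsub>D\<^esub>"
    obtain x y where x: "x \<in> carrier S" and y: "y \<in> carrier S" and dxy: "d = h x \<ominus>\<^bsub>D\<^esub> h y"
      using d cD by auto
    have "(h x \<otimes>\<^bsub>D\<^esub> h x \<oplus>\<^bsub>D\<^esub> h y \<otimes>\<^bsub>D\<^esub> h y) \<ominus>\<^bsub>D\<^esub> (h x \<otimes>\<^bsub>D\<^esub> h y \<oplus>\<^bsub>D\<^esub> h y \<otimes>\<^bsub>D\<^esub> h x) = \<zero>\<^bsub>D\<^esub>"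
      using dd dxy D.sq_diff[OF hC[OF x] hC[OF y]] by simp
    then have "h x \<otimes>\<^bsub>D\<^esub> h x \<oplus>\<^bsub>D\<^esub> h y \<otimes>\<^bsub>D\<^esub> h y = h x \<otimes>\<^bsub>D\<^esub> h y \<oplus>\<^bsub>D\<^esub> h y \<otimes>\<^bsub>D\<^esub> h x"
      using D.rme hC x y by simp
    then have "h (x \<otimes>\<^bsub>S\<^esub> x \<oplus>\<^bsub>S\<^esub> y \<otimes>\<^bsub>S\<^esub> y) = h (x \<otimes>\<^bsub>S\<^esub> y \<oplus>\<^bsub>S\<^esub> y \<otimes>\<^bsub>S\<^esub> x)"
      using x y by (simp add: hadd hmul mC)
    then have "x \<otimes>\<^bsub>S\<^esub> x \<oplus>\<^bsub>S\<^esub> y \<otimes>\<^bsub>S\<^esub> y = x \<otimes>\<^bsub>S\<^esub> y \<oplus>\<^bsub>S\<^esub> y \<otimes>\<^bsub>S\<^esub> x"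
      using inj x y by (simp add: inj_on_eq_iff mC aC)
    then have "x = y" using red x y unfolding reduced_def by blast
    then show "d = \<zero>\<^bsub>D\<^esub>" using dxy D.rme hC y by simp
  qed
  show ?thesis
  proof
    assume mc: "mult_commutative S"
    have hcomm: "h x \<otimes>\<^bsub>D\<^esub> h y = h y \<otimes>\<^bsub>D\<^esub> h x" if "x \<in> carrier S" "y \<in> carrier S" for x y
      using that mc unfolding mult_commutative_def by (metis hmul)
    have hd: "h x \<otimes>\<^bsub>D\<^esub> d = d \<otimes>\<^bsub>D\<^esub> h x" if xd: "x \<in> carrier S" "d \<in> carrier D" for x d
    proof -
      obtain a b where a: "a \<in> carrier S" and b: "b \<in> carrier S" and d: "d = h a \<ominus>\<^bsub>D\<^esub> h b"
        using xd cD by auto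
      show ?thesis unfolding d
        by (rule D.comm_diff) (use xd a b hC hcomm in auto)
    qed
    have Dc: "d \<otimes>\<^bsub>D\<^esub> e = e \<otimes>\<^bsub>D\<^esub> d" if de: "d \<in> carrier D" "e \<in> carrier D" for d e
    proof -
      obtain a b where a: "a \<in> carrier S" and b: "b \<in> carrier S" and e: "e = h a \<ominus>\<^bsub>D\<^esub> h b"
        using de cD by auto
      show ?thesis unfolding e
        by (rule D.comm_diff) (use de a b hC hd in \<open>auto simp: e\<close>)
    qed
    have cen: "center D = carrier D" unfolding center_def using Dc by auto
    show "centrally_essential D"
      unfolding centrally_essential_def
    proof (intro ballI impI)
      fix x assume x: "x \<in> carrier D" "x \<noteq> \<zero>\<^bsub>D\<^esub>"
      have "\<one>\<^bsub>D\<^esub> \<noteq> \<zero>\<^bsub>D\<^esub>"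
      proof
        assume "\<one>\<^bsub>D\<^esub> = \<zero>\<^bsub>D\<^esub>"
        then have "x = x \<otimes>\<^bsub>D\<^esub> \<zero>\<^bsub>D\<^esub>" using x by (metis D.r_one)
        then show False using x by simp
      qed
      then show "\<exists>y\<in>center D. \<exists>z\<in>center D. y \<noteq> \<zero>\<^bsub>D\<^esub> \<and> z \<noteq> \<zero>\<^bsub>D\<^esub> \<and> x \<otimes>\<^bsub>D\<^esub> y = z"
        using x cen by (intro bexI[of _ "\<one>\<^bsub>D\<^esub>"] bexI[of _ x]) auto
    qed
  next
    assume ce: "centrally_essential D"
    show "mult_commutative S"
      unfolding mult_commutative_def
    proof (intro ballI)
      fix x y assume x: "x \<in> carrier S" and y: "y \<in> carrier S"
      have "h (x \<otimes>\<^bsub>S\<^esub> y) = h (y \<otimes>\<^bsub>S\<^esub> x)"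
        using D.reduced_ce_comm[OF Dred ce hC[OF x] hC[OF y]] x y by (simp add: hmul)
      then show "x \<otimes>\<^bsub>S\<^esub> y = y \<otimes>\<^bsub>S\<^esub> x"
        using inj x y by (simp add: inj_on_eq_iff mC)
    qed
  qed
qed




type_synonym E = "nat \<times> int \<times> int \<times> int \<times> int"

definition qadd :: "E \<Rightarrow> E \<Rightarrow> E" where
  "qadd = (\<lambda>(n,a1,b1,c1,d1) (m,a2,b2,c2,d2). (n+m, a1+a2, b1+b2, c1+c2, d1+d2))"

definition qmul :: "E \<Rightarrow> E \<Rightarrow> E" where
  "qmul = (\<lambda>(n,a1,b1,c1,d1) (m,a2,b2,c2,d2). (n*m,
     a1*a2 - b1*b2 - c1*c2 - d1*d2,
     a1*b2 + b1*a2 + c1*d2 - d1*c2,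
     a1*c2 - b1*d2 + c1*a2 + d1*b2,
     a1*d2 + b1*c2 - c1*b2 + d1*a2))"

definition S0 :: "E set" where "S0 = {x. fst x \<ge> 1} \<union> {(0,0,0,0,0)}"

lemma qadd_simp[simp]: "qadd (n,a1,b1,c1,d1) (m,a2,b2,c2,d2) = (n+m, a1+a2, b1+b2, c1+c2, d1+d2)"
  by (simp add: qadd_def)
lemma qmul_simp[simp]: "qmul (n,a1,b1,c1,d1) (m,a2,b2,c2,d2) = (n*m,
     a1*a2 - b1*b2 - c1*c2 - d1*d2,
     a1*b2 + b1*a2 + c1*d2 - d1*c2,
     a1*c2 - b1*d2 + c1*a2 + d1*b2,
     a1*d2 + b1*c2 - c1*b2 + d1*a2)"
  by (simp add: qmul_def)

lemma qadd_assoc: "qadd (qadd x y) z = qadd x (qadd y z)"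
  by (cases x rule: prod_cases5, cases y rule: prod_cases5, cases z rule: prod_cases5) (simp add: algebra_simps)
lemma qadd_comm: "qadd x y = qadd y x"
  by (cases x rule: prod_cases5, cases y rule: prod_cases5) (simp add: algebra_simps)
lemma qadd_0: "qadd x (0,0,0,0,0) = x"
  by (cases x rule: prod_cases5) simp
lemma qmul_assoc: "qmul (qmul x y) z = qmul x (qmul y z)"
  by (cases x rule: prod_cases5, cases y rule: prod_cases5, cases z rule: prod_cases5) (simp add: algebra_simps)
lemma qmul_rdistr: "qmul x (qadd y z) = qadd (qmul x y) (qmul x z)"
  by (cases x rule: prod_cases5, cases y rule: prod_cases5, cases z rule: prod_cases5) (simp add: algebra_simps)
lemma qmul_ldistr: "qmul (qadd y z) x = qadd (qmul y x) (qmul z x)"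
  by (cases x rule: prod_cases5, cases y rule: prod_cases5, cases z rule: prod_cases5) (simp add: algebra_simps)
lemma qmul_1: "qmul (1,1,0,0,0) x = x" "qmul x (1,1,0,0,0) = x"
  by (cases x rule: prod_cases5, simp)+
lemma qmul_0: "qmul (0,0,0,0,0) x = (0,0,0,0,0)" "qmul x (0,0,0,0,0) = (0,0,0,0,0)"
  by (cases x rule: prod_cases5, simp)+
lemma qmul_c: "qmul (k,0,0,0,0) x = qmul x (k,0,0,0,0)"
  by (cases x rule: prod_cases5) (simp add: algebra_simps)
lemma qadd_cancel: "qadd x z = qadd y z \<Longrightarrow> x = y"
  by (cases x rule: prod_cases5, cases y rule: prod_cases5, cases z rule: prod_cases5) simp

lemma S0_zero: "fst x = 0 \<Longrightarrow> x \<in> S0 \<Longrightarrow> x = (0,0,0,0,0)"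
  by (auto simp: S0_def)
lemma S0_add: "x \<in> S0 \<Longrightarrow> y \<in> S0 \<Longrightarrow> qadd x y \<in> S0"
  by (cases x rule: prod_cases5, cases y rule: prod_cases5) (auto simp: S0_def)
lemma S0_mul: "x \<in> S0 \<Longrightarrow> y \<in> S0 \<Longrightarrow> qmul x y \<in> S0"
  by (cases x rule: prod_cases5, cases y rule: prod_cases5) (auto simp: S0_def)

lemma int_red:
  fixes a1 b1 c1 d1 a2 b2 c2 d2 :: int
  assumes "a1*a1 - b1*b1 - c1*c1 - d1*d1 + (a2*a2 - b2*b2 - c2*c2 - d2*d2) =
           a1*a2 - b1*b2 - c1*c2 - d1*d2 + (a2*a1 - b2*b1 - c2*c1 - d2*d1)"
    and "a1*b1 + b1*a1 + c1*d1 - d1*c1 + (a2*b2 + b2*a2 + c2*d2 - d2*c2) =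
         a1*b2 + b1*a2 + c1*d2 - d1*c2 + (a2*b1 + b2*a1 + c2*d1 - d2*c1)"
    and "a1*c1 - b1*d1 + c1*a1 + d1*b1 + (a2*c2 - b2*d2 + c2*a2 + d2*b2) =
         a1*c2 - b1*d2 + c1*a2 + d1*b2 + (a2*c1 - b2*d1 + c2*a1 + d2*b1)"
    and "a1*d1 + b1*c1 - c1*b1 + d1*a1 + (a2*d2 + b2*c2 - c2*b2 + d2*a2) =
         a1*d2 + b1*c2 - c1*b2 + d1*a2 + (a2*d1 + b2*c1 - c2*b1 + d2*a1)"
  shows "a1 = a2 \<and> b1 = b2 \<and> c1 = c2 \<and> d1 = d2"
proof -
  define e0 where "e0 = a1 - a2"
  define e1 where "e1 = b1 - b2"
  define e2 where "e2 = c1 - c2"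
  define e3 where "e3 = d1 - d2"
  have h0: "e0*e0 - e1*e1 - e2*e2 - e3*e3 = 0"
  proof -
    have "e0*e0 - e1*e1 - e2*e2 - e3*e3 = (a1*a1 - b1*b1 - c1*c1 - d1*d1 + (a2*a2 - b2*b2 - c2*c2 - d2*d2)) -
           (a1*a2 - b1*b2 - c1*c2 - d1*d2 + (a2*a1 - b2*b1 - c2*c1 - d2*d1))"
      unfolding e0_def e1_def e2_def e3_def by (simp add: algebra_simps)
    then show ?thesis using assms(1) by simp
  qed
  have h1: "2*(e0*e1) = 0"
  proof -
    have "2*(e0*e1) = (a1*b1 + b1*a1 + c1*d1 - d1*c1 + (a2*b2 + b2*a2 + c2*d2 - d2*c2)) -
         (a1*b2 + b1*a2 + c1*d2 - d1*c2 + (a2*b1 + b2*a1 + c2*d1 - d2*c1))"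
      unfolding e0_def e1_def e2_def e3_def by (simp add: algebra_simps)
    then show ?thesis using assms(2) by simp
  qed
  have h2: "2*(e0*e2) = 0"
  proof -
    have "2*(e0*e2) = (a1*c1 - b1*d1 + c1*a1 + d1*b1 + (a2*c2 - b2*d2 + c2*a2 + d2*b2)) -
         (a1*c2 - b1*d2 + c1*a2 + d1*b2 + (a2*c1 - b2*d1 + c2*a1 + d2*b1))"
      unfolding e0_def e1_def e2_def e3_def by (simp add: algebra_simps)
    then show ?thesis using assms(3) by simp
  qed
  have h3: "2*(e0*e3) = 0"
  proof -
    have "2*(e0*e3) = (a1*d1 + b1*c1 - c1*b1 + d1*a1 + (a2*d2 + b2*c2 - c2*b2 + d2*a2)) -
         (a1*d2 + b1*c2 - c1*b2 + d1*a2 + (a2*d1 + b2*c1 - c2*b1 + d2*a1))"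
      unfolding e0_def e1_def e2_def e3_def by (simp add: algebra_simps)
    then show ?thesis using assms(4) by simp
  qed
  have s: "e1*e1 \<ge> 0" "e2*e2 \<ge> 0" "e3*e3 \<ge> 0" by auto
  have "e0 = 0"
  proof (rule ccontr)
    assume "e0 \<noteq> 0"
    then have "e1 = 0" "e2 = 0" "e3 = 0" using h1 h2 h3 by auto
    then have "e0 * e0 = 0" using h0 by simp
    then show False using \<open>e0 \<noteq> 0\<close> by simp
  qed
  then have "e1*e1 + e2*e2 + e3*e3 = 0" using h0 by simp
  then have "e1*e1 = 0" "e2*e2 = 0" "e3*e3 = 0" using s by linarith+
  then show ?thesis using \<open>e0 = 0\<close> unfolding e0_def e1_def e2_def e3_def by auto
qed

lemma nat_red:
  fixes n m :: nat
  assumes "n*n + m*m = n*m + m*n" shows "n = m"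
proof -
  have h: "int n * int n + int m * int m = int n * int m + int m * int n"
    using arg_cong[OF assms, of int] by simp
  have "(int n - int m) * (int n - int m) = (int n * int n + int m * int m) - (int n * int m + int m * int n)"
    by (simp add: algebra_simps)
  then have "(int n - int m) * (int n - int m) = 0" using h by simp
  then show ?thesis by simp
qed

lemma q_red: "qadd (qmul x x) (qmul y y) = qadd (qmul x y) (qmul y x) \<Longrightarrow> x = y"
proof (cases x rule: prod_cases5, cases y rule: prod_cases5)
  fix n a1 b1 c1 d1 m a2 b2 c2 d2
  assume x: "x = (n,a1,b1,c1,d1)" and y: "y = (m,a2,b2,c2,d2)"
    and eq: "qadd (qmul x x) (qmul y y) = qadd (qmul x y) (qmul y x)"
  have E: "n*n + m*m = n*m + m*n \<and>
    (a1*a1 - b1*b1 - c1*c1 - d1*d1 + (a2*a2 - b2*b2 - c2*c2 - d2*d2) =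
           a1*a2 - b1*b2 - c1*c2 - d1*d2 + (a2*a1 - b2*b1 - c2*c1 - d2*d1)) \<and>
    (a1*b1 + b1*a1 + c1*d1 - d1*c1 + (a2*b2 + b2*a2 + c2*d2 - d2*c2) =
         a1*b2 + b1*a2 + c1*d2 - d1*c2 + (a2*b1 + b2*a1 + c2*d1 - d2*c1)) \<and>
    (a1*c1 - b1*d1 + c1*a1 + d1*b1 + (a2*c2 - b2*d2 + c2*a2 + d2*b2) =
         a1*c2 - b1*d2 + c1*a2 + d1*b2 + (a2*c1 - b2*d1 + c2*a1 + d2*b1)) \<and>
    (a1*d1 + b1*c1 - c1*b1 + d1*a1 + (a2*d2 + b2*c2 - c2*b2 + d2*a2) =
         a1*d2 + b1*c2 - c1*b2 + d1*a2 + (a2*d1 + b2*c1 - c2*b1 + d2*a1))"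
    using eq unfolding x y qmul_simp qadd_simp prod.inject .
  then have "n = m" using nat_red by blast
  moreover have "a1 = a2 \<and> b1 = b2 \<and> c1 = c2 \<and> d1 = d2"
    using int_red E by blast
  ultimately show "x = y" by (simp add: x y)
qed

definition SS :: "nat ring" where
  "SS = \<lparr>carrier = to_nat ` S0, mult = (\<lambda>a b. to_nat (qmul (from_nat a) (from_nat b))),
     one = to_nat ((1,1,0,0,0)::E), zero = to_nat ((0,0,0,0,0)::E),
     add = (\<lambda>a b. to_nat (qadd (from_nat a) (from_nat b)))\<rparr>"

lemma ball_img: "(\<forall>x\<in>f ` A. P x) \<longleftrightarrow> (\<forall>x\<in>A. P (f x))" by auto

lemma S0_1: "(1,1,0,0,0) \<in> S0" and S0_00: "(0,0,0,0,0) \<in> S0" by (auto simp: S0_def)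



lemma S0_Suc: "(Suc 0,1,0,0,0) \<in> S0" using S0_1 by simp
lemma qmul_Suc: "qmul (Suc 0,1,0,0,0) x = x" "qmul x (Suc 0,1,0,0,0) = x" using qmul_1 by simp_all
lemma sr: "semiring SS"
    unfolding semiring_def SS_def
    by (simp add: ball_img S0_1 S0_00 S0_add S0_mul qadd_assoc qmul_assoc qmul_rdistr qmul_ldistr
        qadd_0 qmul_1 qmul_0 qadd_comm[of _ "(0,0,0,0,0)"])
       (use S0_1 qmul_1 qadd_comm in \<open>auto simp: S0_Suc qmul_Suc\<close>)
lemma ac: "add_cancellative SS"
    unfolding add_cancellative_def SS_def by (simp add: ball_img) (metis qadd_cancel)
lemma rd: "reduced SS"
    unfolding reduced_def SS_def by (simp add: ball_img) (metis q_red)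


lemma nc: "\<not> mult_commutative SS"
  proof
    assume "mult_commutative SS"
    then have "\<forall>x\<in>S0. \<forall>y\<in>S0. qmul x y = qmul y x"
      unfolding mult_commutative_def SS_def by (simp add: ball_img)
    moreover have "((1,0,1,0,0)::E) \<in> S0" "((1,0,0,1,0)::E) \<in> S0" by (auto simp: S0_def)
    ultimately have "qmul (1,0,1,0,0) (1,0,0,1,0) = qmul (1,0,0,1,0) (1,0,1,0,0)" by blast
    then show False by simp
  qed
lemma nzd: "no_zero_divisors SS"
    unfolding no_zero_divisors_def SS_def
  proof (simp add: ball_img, intro ballI impI)
    fix x y assume x: "x \<in> S0" and y: "y \<in> S0" and xy: "qmul x y = (0,0,0,0,0)"
    obtain n a b c d where xx: "x = (n,a,b,c,d)" by (cases x rule: prod_cases5)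
    obtain m a' b' c' d' where yy: "y = (m,a',b',c',d')" by (cases y rule: prod_cases5)
    have "n * m = 0" using xy by (simp add: xx yy)
    then have "fst x = 0 \<or> fst y = 0" by (simp add: xx yy)
    then show "x = (0,0,0,0,0) \<or> y = (0,0,0,0,0)" using S0_zero x y by blast
  qed
lemma ce: "centrally_essential SS"
    unfolding centrally_essential_def
  proof (intro ballI impI)
    fix x assume "x \<in> carrier SS" and nz: "x \<noteq> \<zero>\<^bsub>SS\<^esub>"
    then obtain e where e: "e \<in> S0" and xe: "x = to_nat e" by (auto simp: SS_def)
    have "e \<noteq> (0,0,0,0,0)" using nz xe by (auto simp: SS_def)
    then have k: "fst e \<ge> 1" using e by (auto simp: S0_def)
    have cen: "to_nat ((k,0,0,0,0)::E) \<in> center SS" if "k \<ge> 1" for k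
      unfolding center_def SS_def using that by (auto simp: S0_def qmul_c)
    have ne: "to_nat ((k,0,0,0,0)::E) \<noteq> \<zero>\<^bsub>SS\<^esub>" if "k \<ge> 1" for k
      using that by (auto simp: SS_def)
    have prod: "x \<otimes>\<^bsub>SS\<^esub> to_nat ((1,0,0,0,0)::E) = to_nat ((fst e,0,0,0,0)::E)"
      by (cases e rule: prod_cases5) (simp add: SS_def xe)
    show "\<exists>y\<in>center SS. \<exists>z\<in>center SS. y \<noteq> \<zero>\<^bsub>SS\<^esub> \<and> z \<noteq> \<zero>\<^bsub>SS\<^esub> \<and> x \<otimes>\<^bsub>SS\<^esub> y = z"
      using cen[of 1] cen[OF k] ne[of 1] ne[OF k] prod by blast
  qed


theorem theorem1p2:
  shows "(\<exists>S :: nat ring. semiring S \<and> \<not> mult_commutative S \<and> add_cancellative S \<and>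
            reduced S \<and> centrally_essential S \<and> no_zero_divisors S)
       \<and> (\<forall>(S :: ('a, 'm) ring_scheme) (D :: ('b, 'n) ring_scheme) h.
            semiring S \<and> add_cancellative S \<and> reduced S \<and> ring_of_differences S D h \<longrightarrow>
            (mult_commutative S \<longleftrightarrow> centrally_essential D))"
proof (intro conjI allI impI)
  show "\<exists>S :: nat ring. semiring S \<and> \<not> mult_commutative S \<and> add_cancellative S \<and>
            reduced S \<and> centrally_essential S \<and> no_zero_divisors S"
    using sr nc ac rd ce nzd by blast
next
  fix S :: "('a, 'm) ring_scheme" and D :: "('b, 'n) ring_scheme" and h
  assume "semiring S \<and> add_cancellative S \<and> reduced S \<and> ring_of_differences S D h"
  then show "mult_commutative S \<longleftrightarrow> centrally_essential D"
    using part2 by blast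
qed

end
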